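(* Let $\mathbb{X}$ be a Cartesian left additive category with a combinator $\mathsf{D}$ sending each $f:A\to B$ to $\mathsf{D}[f]:A\times A\to B$, satisfying [CD.3]: $\mathsf{D}[1]=\pi_1$ and $\mathsf{D}[\pi_j]=\pi_1\pi_j$ ($j\in\{0,1\}$), and [CD.5]: $\mathsf{D}[fg]=\langle\pi_0f,\mathsf{D}[f]\rangle\mathsf{D}[g]$. Then [CD.4] holds: $\mathsf{D}[\langle f,g\rangle]=\langle\mathsf{D}[f],\mathsf{D}[g]\rangle$ for all $f:C\to A$, $g:C\to B$.
   Context: Composition in diagrammatic order. A Cartesian left additive category: a category with finite products whose hom-sets are commutative monoids with $f(g+h)=fg+fh$, $f0=0$, and whose projections are additive. In [CD.3], $\pi_j:A_0\times A_1\to A_j$ and $\pi_1:(A_0\times A_1)\times(A_0\times A_1)\to A_0\times A_1$. *)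

theory Defs
  imports Main
begin

text \<open>Composition is written in diagrammatic order: comp f g is "f then g",
defined when cod f = dom g.\<close>

locale cartesian_left_additive_category =
  fixes dom :: "'a \<Rightarrow> 'o" and cod :: "'a \<Rightarrow> 'o"
    and comp :: "'a \<Rightarrow> 'a \<Rightarrow> 'a"
    and idn :: "'o \<Rightarrow> 'a"
    and trm :: "'o" and bang :: "'o \<Rightarrow> 'a"
    and prd :: "'o \<Rightarrow> 'o \<Rightarrow> 'o"
    and p0 :: "'o \<Rightarrow> 'o \<Rightarrow> 'a" and p1 :: "'o \<Rightarrow> 'o \<Rightarrow> 'a"
    and pair :: "'a \<Rightarrow> 'a \<Rightarrow> 'a"
    and zero :: "'o \<Rightarrow> 'o \<Rightarrow> 'a" and plus :: "'a \<Rightarrow> 'a \<Rightarrow> 'a"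
  assumes dom_idn: "dom (idn A) = A" and cod_idn: "cod (idn A) = A"
    and dom_comp: "cod f = dom g \<Longrightarrow> dom (comp f g) = dom f"
    and cod_comp: "cod f = dom g \<Longrightarrow> cod (comp f g) = cod g"
    and comp_assoc: "cod f = dom g \<Longrightarrow> cod g = dom h \<Longrightarrow>
                     comp (comp f g) h = comp f (comp g h)"
    and idn_left: "comp (idn (dom f)) f = f"
    and idn_right: "comp f (idn (cod f)) = f"
    and dom_bang: "dom (bang A) = A" and cod_bang: "cod (bang A) = trm"
    and bang_unique: "dom f = A \<Longrightarrow> cod f = trm \<Longrightarrow> f = bang A"
    and dom_p0: "dom (p0 A B) = prd A B" and cod_p0: "cod (p0 A B) = A"
    and dom_p1: "dom (p1 A B) = prd A B" and cod_p1: "cod (p1 A B) = B"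
    and dom_pair: "dom f = dom g \<Longrightarrow> dom (pair f g) = dom f"
    and cod_pair: "dom f = dom g \<Longrightarrow> cod (pair f g) = prd (cod f) (cod g)"
    and pair_p0: "dom f = dom g \<Longrightarrow> comp (pair f g) (p0 (cod f) (cod g)) = f"
    and pair_p1: "dom f = dom g \<Longrightarrow> comp (pair f g) (p1 (cod f) (cod g)) = g"
    and pair_eta: "cod h = prd A B \<Longrightarrow> pair (comp h (p0 A B)) (comp h (p1 A B)) = h"
    and dom_zero: "dom (zero A B) = A" and cod_zero: "cod (zero A B) = B"
    and dom_plus: "dom f = dom g \<Longrightarrow> cod f = cod g \<Longrightarrow> dom (plus f g) = dom f"
    and cod_plus: "dom f = dom g \<Longrightarrow> cod f = cod g \<Longrightarrow> cod (plus f g) = cod f"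
    and plus_assoc: "dom f = dom g \<Longrightarrow> cod f = cod g \<Longrightarrow> dom g = dom h \<Longrightarrow> cod g = cod h \<Longrightarrow>
                     plus (plus f g) h = plus f (plus g h)"
    and plus_comm: "dom f = dom g \<Longrightarrow> cod f = cod g \<Longrightarrow> plus f g = plus g f"
    and plus_zero: "plus f (zero (dom f) (cod f)) = f"
    and comp_plus: "cod f = dom g \<Longrightarrow> dom g = dom h \<Longrightarrow> cod g = cod h \<Longrightarrow>
                    comp f (plus g h) = plus (comp f g) (comp f h)"
    and comp_zero: "cod f = A \<Longrightarrow> comp f (zero A B) = zero (dom f) B"
    and p0_additive: "dom f = dom g \<Longrightarrow> cod f = prd A B \<Longrightarrow> cod g = prd A B \<Longrightarrow>
                      comp (plus f g) (p0 A B) = plus (comp f (p0 A B)) (comp g (p0 A B))"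
    and p1_additive: "dom f = dom g \<Longrightarrow> cod f = prd A B \<Longrightarrow> cod g = prd A B \<Longrightarrow>
                      comp (plus f g) (p1 A B) = plus (comp f (p1 A B)) (comp g (p1 A B))"
    and p0_zero: "comp (zero C (prd A B)) (p0 A B) = zero C A"
    and p1_zero: "comp (zero C (prd A B)) (p1 A B) = zero C B"

end

theory Submission
  imports Defs
begin

theorem lemma2p6:
  fixes dom :: "'a \<Rightarrow> 'o" and cod :: "'a \<Rightarrow> 'o"
    and comp :: "'a \<Rightarrow> 'a \<Rightarrow> 'a"
    and idn :: "'o \<Rightarrow> 'a"
    and trm :: "'o" and bang :: "'o \<Rightarrow> 'a"
    and prd :: "'o \<Rightarrow> 'o \<Rightarrow> 'o"
    and p0 :: "'o \<Rightarrow> 'o \<Rightarrow> 'a" and p1 :: "'o \<Rightarrow> 'o \<Rightarrow> 'a"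
    and pair :: "'a \<Rightarrow> 'a \<Rightarrow> 'a"
    and zero :: "'o \<Rightarrow> 'o \<Rightarrow> 'a" and plus :: "'a \<Rightarrow> 'a \<Rightarrow> 'a"
    and D :: "'a \<Rightarrow> 'a"
  assumes CLAC: "cartesian_left_additive_category dom cod comp idn trm bang prd p0 p1 pair zero plus"
    and D_type: "\<And>f. dom (D f) = prd (dom f) (dom f) \<and> cod (D f) = cod f"
    and CD3_id: "\<And>A. D (idn A) = p1 A A"
    and CD3_p0: "\<And>A B. D (p0 A B) = comp (p1 (prd A B) (prd A B)) (p0 A B)"
    and CD3_p1: "\<And>A B. D (p1 A B) = comp (p1 (prd A B) (prd A B)) (p1 A B)"
    and CD5: "\<And>f g. cod f = dom g \<Longrightarrow>
               D (comp f g) = comp (pair (comp (p0 (dom f) (dom f)) f) (D f)) (D g)"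
    and fg: "dom f = C" "cod f = A" "dom g = C" "cod g = B"
  shows "D (pair f g) = pair (D f) (D g)"
proof -
  interpret C: cartesian_left_additive_category dom cod comp idn trm bang prd p0 p1 pair zero plus
    by (rule CLAC)
  define h where "h = pair f g"
  have dh: "dom h = C" and ch: "cod h = prd A B" using fg by (simp_all add: h_def C.dom_pair C.cod_pair)
  define X where "X = comp (p0 (dom h) (dom h)) h"
  have dX: "dom X = prd C C" and cX: "cod X = prd A B"
    using dh ch by (simp_all add: X_def C.dom_comp C.cod_comp C.dom_p0 C.cod_p0)
  have dDh: "dom (D h) = prd C C" and cDh: "cod (D h) = prd A B" using D_type dh ch by auto
  have cpr: "cod (pair X (D h)) = prd (prd A B) (prd A B)" using dX cX dDh cDh by (simp add: C.cod_pair)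
  have e0: "D (comp h (p0 A B)) = comp (D h) (p0 A B)"
  proof -
    have "D (comp h (p0 A B)) = comp (pair X (D h)) (comp (p1 (prd A B) (prd A B)) (p0 A B))"
      using CD5[of h "p0 A B"] ch by (simp add: C.dom_p0 CD3_p0 X_def)
    also have "\<dots> = comp (comp (pair X (D h)) (p1 (prd A B) (prd A B))) (p0 A B)"
      using cpr by (simp add: C.comp_assoc C.dom_p1 C.cod_p1 C.dom_p0)
    also have "\<dots> = comp (D h) (p0 A B)"
      using C.pair_p1[of X "D h"] dX dDh cX cDh by simp
    finally show ?thesis .
  qed
  have e1: "D (comp h (p1 A B)) = comp (D h) (p1 A B)"
  proof -
    have "D (comp h (p1 A B)) = comp (pair X (D h)) (comp (p1 (prd A B) (prd A B)) (p1 A B))"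
      using CD5[of h "p1 A B"] ch by (simp add: C.dom_p1 CD3_p1 X_def)
    also have "\<dots> = comp (comp (pair X (D h)) (p1 (prd A B) (prd A B))) (p1 A B)"
      using cpr by (simp add: C.comp_assoc C.dom_p1 C.cod_p1)
    also have "\<dots> = comp (D h) (p1 A B)"
      using C.pair_p1[of X "D h"] dX dDh cX cDh by simp
    finally show ?thesis .
  qed
  have "comp h (p0 A B) = f" using C.pair_p0[of f g] fg by (simp add: h_def)
  moreover have "comp h (p1 A B) = g" using C.pair_p1[of f g] fg by (simp add: h_def)
  ultimately have "D f = comp (D h) (p0 A B)" "D g = comp (D h) (p1 A B)" using e0 e1 by auto
  then show ?thesis using C.pair_eta[OF cDh] by (simp add: h_def)
qed

end
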